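(* Let $k$ be a positive integer, and let $T$ be a tree with $ex(T)=1$ such that $\ell_1, \ell_2, \ldots, \ell_{\alpha}$ are the terminal vertices of the exterior major vertex $v$ of $T$. Then $\dim_{k,f}(T)=\dim_f(T)$ if and only if $d(v, \ell_i) \le k$ for each $i\in\{1,2,\ldots,\alpha\}$.
   Context: $d(x,y)$ is the distance in the tree. For a function $g$ on $V(T)$ and $U\subseteq V(T)$, $g(U)=\sum_{s\in U}g(s)$. $R\{x,y\}=\{z: d(x,z)\ne d(y,z)\}$; $g:V(T)\to[0,1]$ is a resolving function if $g(R\{x,y\})\ge1$ for all distinct $x,y$; $\dim_f(T)$ is the minimum of $g(V(T))$ over resolving functions. For a positive integer $k$, $d_k(x,y)=\min\{d(x,y),k+1\}$, $R_k\{x,y\}=\{z: d_k(x,z)\neq d_k(y,z)\}$; $h:V(T)\to[0,1]$ is a $k$-truncated resolving function if $h(R_k\{x,y\})\ge 1$ for all distinct $x,y$, and $\dim_{k,f}(T)$ is the minimum of $h(V(T))$ over such $h$. A leaf has degree one; a major vertex has degree at least three. A leaf $\ell$ is a terminal vertex of a major vertex $v$ if $d(\ell,v)<d(\ell,w)$ for every other major vertex $w$; an exterior major vertex is a major vertex with at least one terminal vertex; $ex(T)$ is the number of exterior major vertices. *)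

theory Defs
  imports Main "HOL-Library.Extended_Real"
begin

definition walk :: "('a \<Rightarrow> 'a \<Rightarrow> bool) \<Rightarrow> 'a list \<Rightarrow> bool" where
  "walk adj xs \<longleftrightarrow> xs \<noteq> [] \<and> (\<forall>i. Suc i < length xs \<longrightarrow> adj (xs ! i) (xs ! Suc i))"

definition edges :: "('a \<Rightarrow> 'a \<Rightarrow> bool) \<Rightarrow> 'a set set" where
  "edges adj = {{x, y} | x y. adj x y}"

definition is_tree :: "'a set \<Rightarrow> ('a \<Rightarrow> 'a \<Rightarrow> bool) \<Rightarrow> bool" where
  "is_tree V adj \<longleftrightarrow> finite V \<and> V \<noteq> {}
     \<and> (\<forall>x y. adj x y \<longrightarrow> x \<in> V \<and> y \<in> V)
     \<and> (\<forall>x y. adj x y \<longrightarrow> adj y x)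
     \<and> (\<forall>x. \<not> adj x x)
     \<and> (\<forall>x\<in>V. \<forall>y\<in>V. \<exists>xs. walk adj xs \<and> hd xs = x \<and> last xs = y)
     \<and> card (edges adj) + 1 = card V"

definition gdist :: "('a \<Rightarrow> 'a \<Rightarrow> bool) \<Rightarrow> 'a \<Rightarrow> 'a \<Rightarrow> nat" where
  "gdist adj x y = (LEAST n. \<exists>xs. walk adj xs \<and> hd xs = x \<and> last xs = y \<and> length xs = Suc n)"

definition degree :: "('a \<Rightarrow> 'a \<Rightarrow> bool) \<Rightarrow> 'a \<Rightarrow> nat" where
  "degree adj v = card {u. adj v u}"

definition leaf :: "'a set \<Rightarrow> ('a \<Rightarrow> 'a \<Rightarrow> bool) \<Rightarrow> 'a \<Rightarrow> bool" where
  "leaf V adj l \<longleftrightarrow> l \<in> V \<and> degree adj l = 1"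

definition major :: "'a set \<Rightarrow> ('a \<Rightarrow> 'a \<Rightarrow> bool) \<Rightarrow> 'a \<Rightarrow> bool" where
  "major V adj v \<longleftrightarrow> v \<in> V \<and> degree adj v \<ge> 3"

definition terminal :: "'a set \<Rightarrow> ('a \<Rightarrow> 'a \<Rightarrow> bool) \<Rightarrow> 'a \<Rightarrow> 'a \<Rightarrow> bool" where
  "terminal V adj v l \<longleftrightarrow> major V adj v \<and> leaf V adj l
     \<and> (\<forall>w. major V adj w \<and> w \<noteq> v \<longrightarrow> gdist adj l v < gdist adj l w)"

definition exterior_major :: "'a set \<Rightarrow> ('a \<Rightarrow> 'a \<Rightarrow> bool) \<Rightarrow> 'a \<Rightarrow> bool" where
  "exterior_major V adj v \<longleftrightarrow> major V adj v \<and> (\<exists>l. terminal V adj v l)"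

definition ex_num :: "'a set \<Rightarrow> ('a \<Rightarrow> 'a \<Rightarrow> bool) \<Rightarrow> nat" where
  "ex_num V adj = card {v. exterior_major V adj v}"

definition Rset :: "'a set \<Rightarrow> ('a \<Rightarrow> 'a \<Rightarrow> bool) \<Rightarrow> 'a \<Rightarrow> 'a \<Rightarrow> 'a set" where
  "Rset V adj x y = {z \<in> V. gdist adj x z \<noteq> gdist adj y z}"

definition tdist :: "('a \<Rightarrow> 'a \<Rightarrow> bool) \<Rightarrow> nat \<Rightarrow> 'a \<Rightarrow> 'a \<Rightarrow> nat" where
  "tdist adj k x y = min (gdist adj x y) (k + 1)"

definition Rset_k :: "'a set \<Rightarrow> ('a \<Rightarrow> 'a \<Rightarrow> bool) \<Rightarrow> nat \<Rightarrow> 'a \<Rightarrow> 'a \<Rightarrow> 'a set" where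
  "Rset_k V adj k x y = {z \<in> V. tdist adj k x z \<noteq> tdist adj k y z}"

definition resolving_fun :: "'a set \<Rightarrow> ('a \<Rightarrow> 'a \<Rightarrow> bool) \<Rightarrow> ('a \<Rightarrow> real) \<Rightarrow> bool" where
  "resolving_fun V adj g \<longleftrightarrow> (\<forall>s\<in>V. 0 \<le> g s \<and> g s \<le> 1)
     \<and> (\<forall>x\<in>V. \<forall>y\<in>V. x \<noteq> y \<longrightarrow> sum g (Rset V adj x y) \<ge> 1)"

definition k_resolving_fun :: "'a set \<Rightarrow> ('a \<Rightarrow> 'a \<Rightarrow> bool) \<Rightarrow> nat \<Rightarrow> ('a \<Rightarrow> real) \<Rightarrow> bool" where
  "k_resolving_fun V adj k h \<longleftrightarrow> (\<forall>s\<in>V. 0 \<le> h s \<and> h s \<le> 1)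
     \<and> (\<forall>x\<in>V. \<forall>y\<in>V. x \<noteq> y \<longrightarrow> sum h (Rset_k V adj k x y) \<ge> 1)"

text \<open>Fractional (truncated) metric dimension: the minimum (attained, as an LP
  optimum) written as an infimum over the nonempty set of admissible values.\<close>
definition frac_dim :: "'a set \<Rightarrow> ('a \<Rightarrow> 'a \<Rightarrow> bool) \<Rightarrow> real" where
  "frac_dim V adj = Inf {sum g V | g. resolving_fun V adj g}"

definition frac_dim_k :: "'a set \<Rightarrow> ('a \<Rightarrow> 'a \<Rightarrow> bool) \<Rightarrow> nat \<Rightarrow> real" where
  "frac_dim_k V adj k = Inf {sum h V | h. k_resolving_fun V adj k h}"

end

theory Submission
  imports Defs
begin


definition reach :: "('a \<Rightarrow> 'a \<Rightarrow> bool) \<Rightarrow> 'a \<Rightarrow> 'a \<Rightarrow> nat \<Rightarrow> bool" where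
  "reach adj x y n \<longleftrightarrow> (\<exists>xs. walk adj xs \<and> hd xs = x \<and> last xs = y \<and> length xs = Suc n)"

lemma gdist_reach: "gdist adj x y = (LEAST n. reach adj x y n)"
  unfolding gdist_def reach_def by simp

lemma reach_0: "reach adj x x 0"
  unfolding reach_def walk_def by (rule exI[of _ "[x]"]) auto

lemma reach_0_iff: "reach adj x y 0 \<longleftrightarrow> x = y"
  using reach_0[of adj x] unfolding reach_def walk_def by (auto simp: length_Suc_conv)

lemma reach_snoc: assumes "reach adj x y n" "adj y z" shows "reach adj x z (Suc n)"
proof -
  obtain xs where xs: "walk adj xs" "hd xs = x" "last xs = y" "length xs = Suc n"
    using assms(1) unfolding reach_def by blast
  have "walk adj (xs @ [z])"
    unfolding walk_def
  proof (intro conjI allI impI)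
    fix i assume i: "Suc i < length (xs @ [z])"
    show "adj ((xs @ [z]) ! i) ((xs @ [z]) ! Suc i)"
    proof (cases "Suc i < length xs")
      case True thus ?thesis using xs(1) by (auto simp: walk_def nth_append)
    next
      case False
      hence "i = length xs - 1" "xs \<noteq> []" using i xs(4) by auto
      thus ?thesis using xs(3) assms(2) by (auto simp: nth_append last_conv_nth)
    qed
  qed simp
  thus ?thesis unfolding reach_def using xs
    by (intro exI[of _ "xs @ [z]"]) (auto simp: hd_append)
qed

lemma reach_SucD: assumes "reach adj x z (Suc n)" shows "\<exists>y. reach adj x y n \<and> adj y z"
proof -
  obtain xs where xs: "walk adj xs" "hd xs = x" "last xs = z" "length xs = Suc (Suc n)"
    using assms(1) unfolding reach_def by blast
  define ys where "ys = butlast xs"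
  have len: "length ys = Suc n" using xs(4) by (simp add: ys_def)
  have ysne: "ys \<noteq> []" using len by auto
  have wys: "walk adj ys" using xs(1) len ysne unfolding walk_def ys_def
    by (auto simp: nth_butlast)
  have "hd ys = x" using xs(2) xs(4) unfolding ys_def
    by (cases xs) (auto simp: hd_conv_nth nth_butlast)
  moreover have "adj (last ys) z"
  proof -
    have "adj (xs ! n) (xs ! Suc n)" using xs(1) xs(4) unfolding walk_def by auto
    moreover have "last ys = xs ! n"
    proof -
      have "last ys = ys ! n" using len ysne by (simp add: last_conv_nth)
      also have "\<dots> = xs ! n" unfolding ys_def using len by (simp add: nth_butlast ys_def)
      finally show ?thesis .
    qed
    moreover have "xs ! Suc n = z" using xs(3) xs(4)
      by (metis last_conv_nth list.size(3) nat.distinct(1) diff_Suc_1)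
    ultimately show ?thesis by simp
  qed
  ultimately show ?thesis unfolding reach_def using wys len by blast
qed

lemma reach_cons: assumes "adj z x" "reach adj x y n" shows "reach adj z y (Suc n)"
proof -
  obtain xs where xs: "walk adj xs" "hd xs = x" "last xs = y" "length xs = Suc n"
    using assms(2) unfolding reach_def by blast
  have ne: "xs \<noteq> []" using xs(4) by auto
  have "walk adj (z # xs)"
    unfolding walk_def
  proof (intro conjI allI impI)
    fix i assume i: "Suc i < length (z # xs)"
    show "adj ((z # xs) ! i) ((z # xs) ! Suc i)"
    proof (cases i)
      case 0 thus ?thesis using assms(1) xs(2) ne by (simp add: hd_conv_nth)
    next
      case (Suc j) thus ?thesis using xs(1) i unfolding walk_def by auto
    qed
  qed simp
  thus ?thesis unfolding reach_def using xs ne by (intro exI[of _ "z # xs"]) auto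
qed

lemma reach_sym:
  assumes sym: "\<And>a b. adj a b \<Longrightarrow> adj b a"
  shows "reach adj x y n \<Longrightarrow> reach adj y x n"
proof (induction n arbitrary: y)
  case 0 thus ?case by (simp add: reach_0_iff)
next
  case (Suc n)
  obtain w where w: "reach adj x w n" "adj w y" using reach_SucD[OF Suc.prems] by blast
  have "reach adj w x n" using Suc.IH[OF w(1)] .
  thus ?case using reach_cons[of adj y w x n] sym[OF w(2)] by simp
qed

lemma reach_trans: "reach adj y z m \<Longrightarrow> reach adj x y n \<Longrightarrow> reach adj x z (n + m)"
proof (induction m arbitrary: z)
  case 0 thus ?case by (simp add: reach_0_iff)
next
  case (Suc m)
  obtain w where w: "reach adj y w m" "adj w z" using reach_SucD[OF Suc.prems(1)] by blast
  have "reach adj x w (n + m)" using Suc.IH[OF w(1) Suc.prems(2)] .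
  thus ?case using reach_snoc[of adj x w "n + m" z] w(2) by simp
qed




locale tree =
  fixes V :: "'a set" and adj :: "'a \<Rightarrow> 'a \<Rightarrow> bool"
  assumes is_tree: "is_tree V adj"
begin

lemma finV: "finite V" using is_tree unfolding is_tree_def by auto
lemma adjV: "adj x y \<Longrightarrow> x \<in> V \<and> y \<in> V" using is_tree unfolding is_tree_def by auto
lemma adj_sym: "adj x y \<Longrightarrow> adj y x" using is_tree unfolding is_tree_def by auto
lemma adj_irr: "\<not> adj x x" using is_tree unfolding is_tree_def by auto
lemma card_edges: "card (edges adj) + 1 = card V" using is_tree unfolding is_tree_def by auto
lemma conn: assumes "x \<in> V" "y \<in> V" shows "\<exists>n. reach adj x y n"
proof -
  obtain xs where xs: "walk adj xs" "hd xs = x" "last xs = y"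
    using is_tree assms unfolding is_tree_def by blast
  have "xs \<noteq> []" using xs(1) unfolding walk_def by simp
  hence "length xs = Suc (length xs - 1)" by simp
  thus ?thesis unfolding reach_def using xs by blast
qed

lemma reach_gdist: "x \<in> V \<Longrightarrow> y \<in> V \<Longrightarrow> reach adj x y (gdist adj x y)"
  unfolding gdist_reach using conn by (rule LeastI_ex)

lemma gdist_le: "reach adj x y n \<Longrightarrow> gdist adj x y \<le> n"
  unfolding gdist_reach by (rule Least_le)

lemma gdist_self[simp]: "gdist adj x x = 0"
  using gdist_le[OF reach_0] by simp

lemma gdist_0_iff: "x \<in> V \<Longrightarrow> y \<in> V \<Longrightarrow> gdist adj x y = 0 \<longleftrightarrow> x = y"
  using reach_gdist[of x y] by (auto simp: reach_0_iff)

lemma gdist_sym_le: assumes "x \<in> V" "y \<in> V" shows "gdist adj y x \<le> gdist adj x y"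
proof -
  have "reach adj y x (gdist adj x y)" using reach_sym[of adj, OF adj_sym reach_gdist[OF assms]] .
  thus ?thesis by (rule gdist_le)
qed

lemma gdist_sym: "x \<in> V \<Longrightarrow> y \<in> V \<Longrightarrow> gdist adj x y = gdist adj y x"
  using gdist_sym_le[of x y] gdist_sym_le[of y x] by simp

lemma gdist_adj: "adj x y \<Longrightarrow> gdist adj x y = 1"
proof -
  assume a: "adj x y"
  have "reach adj x y 1" using reach_snoc[OF reach_0[of adj x] a] by simp
  hence "gdist adj x y \<le> 1" by (rule gdist_le)
  moreover have "x \<noteq> y" using a adj_irr by auto
  ultimately show ?thesis using gdist_0_iff adjV a by fastforce
qed

lemma gdist_tri: "x \<in> V \<Longrightarrow> y \<in> V \<Longrightarrow> z \<in> V \<Longrightarrow> gdist adj x z \<le> gdist adj x y + gdist adj y z"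
  using reach_trans[OF reach_gdist[of y z] reach_gdist[of x y]] gdist_le by blast

lemma gdist_adj_le: "adj y z \<Longrightarrow> x \<in> V \<Longrightarrow> gdist adj x z \<le> gdist adj x y + 1"
  using gdist_tri[of x y z] gdist_adj adjV by fastforce

lemma parent_ex: assumes "r \<in> V" "x \<in> V" "x \<noteq> r"
  shows "\<exists>y. adj y x \<and> gdist adj r y + 1 = gdist adj r x"
proof -
  have "gdist adj r x \<noteq> 0" using assms gdist_0_iff by auto
  then obtain m where m: "gdist adj r x = Suc m" by (cases "gdist adj r x") auto
  then obtain y where y: "reach adj r y m" "adj y x" using reach_gdist[OF assms(1,2)] reach_SucD by fastforce
  have "gdist adj r y \<le> m" using y(1) gdist_le by blast
  moreover have "gdist adj r x \<le> gdist adj r y + 1" using gdist_adj_le y(2) assms by blast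
  ultimately show ?thesis using y m by (intro exI[of _ y]) auto
qed

definition par :: "'a \<Rightarrow> 'a \<Rightarrow> 'a" where
  "par r x = (SOME y. adj y x \<and> gdist adj r y + 1 = gdist adj r x)"

lemma par: "r \<in> V \<Longrightarrow> x \<in> V \<Longrightarrow> x \<noteq> r \<Longrightarrow> adj (par r x) x \<and> gdist adj r (par r x) + 1 = gdist adj r x"
  unfolding par_def using parent_ex by (rule someI_ex)

lemma finE: "finite (edges adj)"
proof -
  have "edges adj \<subseteq> Pow V" unfolding edges_def using adjV by auto
  thus ?thesis using finV by (meson finite_Pow_iff finite_subset)
qed

lemma edges_par: assumes r: "r \<in> V" shows "edges adj = (\<lambda>x. {x, par r x}) ` (V - {r})"
proof -
  let ?f = "\<lambda>x. {x, par r x}"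
  have sub: "?f ` (V - {r}) \<subseteq> edges adj"
    unfolding edges_def using par[OF r] by blast
  have inj: "inj_on ?f (V - {r})"
  proof (rule inj_onI)
    fix x y assume x: "x \<in> V - {r}" and y: "y \<in> V - {r}" and e: "?f x = ?f y"
    show "x = y"
    proof (rule ccontr)
      assume "x \<noteq> y"
      hence "x = par r y" "y = par r x" using e by (auto simp: doubleton_eq_iff)
      hence "gdist adj r x + 1 = gdist adj r y" "gdist adj r y + 1 = gdist adj r x"
        using par[OF r, of y] par[OF r, of x] x y by auto
      thus False by simp
    qed
  qed
  have "card (?f ` (V - {r})) = card V - 1" using card_image[OF inj] r finV by simp
  also have "\<dots> = card (edges adj)" using card_edges by simp
  finally show ?thesis using card_subset_eq[OF finE sub] by simp
qed

lemma edge_levels: assumes r: "r \<in> V" and a: "adj x y"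
  shows "gdist adj r y = gdist adj r x + 1 \<or> gdist adj r x = gdist adj r y + 1"
proof -
  have "{x, y} \<in> edges adj" unfolding edges_def using a by blast
  then obtain z where z: "z \<in> V - {r}" "{x, y} = {z, par r z}" using edges_par[OF r] by blast
  thus ?thesis using par[OF r, of z] by (auto simp: doubleton_eq_iff)
qed

lemma parent_unique: assumes r: "r \<in> V"
  and a1: "adj y1 x" "gdist adj r y1 + 1 = gdist adj r x"
  and a2: "adj y2 x" "gdist adj r y2 + 1 = gdist adj r x"
  shows "y1 = y2"
proof -
  have key: "y = par r x" if "adj y x" "gdist adj r y + 1 = gdist adj r x" for y
  proof -
    have "{y, x} \<in> edges adj" unfolding edges_def using that by blast
    then obtain z where z: "z \<in> V - {r}" "{y, x} = {z, par r z}" using edges_par[OF r] by blast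
    thus ?thesis using par[OF r, of z] that by (auto simp: doubleton_eq_iff)
  qed
  show ?thesis using key[OF a1] key[OF a2] by simp
qed

lemma child: assumes r: "r \<in> V" and a: "adj x y" and np: "\<And>z. adj z x \<Longrightarrow> gdist adj r z + 1 = gdist adj r x \<Longrightarrow> z \<noteq> y"
  shows "gdist adj r y = gdist adj r x + 1"
  using edge_levels[OF r a] np[of y] a adj_sym by auto

end



context tree begin

lemma branch_parent:
  assumes z: "z \<in> V" and zc: "adj z c" and y: "y \<in> V" and yb: "gdist adj y c + 1 = gdist adj y z"
    and py: "adj p y" and pd: "gdist adj z p + 1 = gdist adj z y" and pz: "p \<noteq> z"
  shows "gdist adj p c + 1 = gdist adj p z"
proof -
  have c: "c \<in> V" using adjV zc by auto
  have p: "p \<in> V" using adjV py by auto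
  have "y \<noteq> c"
  proof
    assume "y = c"
    hence "gdist adj z y = 1" using gdist_adj zc by simp
    hence "gdist adj z p = 0" using pd by simp
    thus False using gdist_0_iff z p pz by auto
  qed
  obtain q where q: "adj q y" "gdist adj c q + 1 = gdist adj c y" using par[OF c y \<open>y \<noteq> c\<close>] by blast
  have qV: "q \<in> V" using adjV q by auto
  have "gdist adj z q \<le> gdist adj z c + gdist adj c q" using gdist_tri z c qV by blast
  also have "\<dots> = 1 + gdist adj c q" using gdist_adj zc by simp
  finally have "gdist adj z q + 1 \<le> gdist adj z y"
    using q(2) yb gdist_sym[OF y c] gdist_sym[OF y z] by simp
  hence "gdist adj z q + 1 = gdist adj z y" using edge_levels[OF z q(1)] by auto
  hence "q = p" using parent_unique[OF z q(1) _ py pd] by simp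
  thus ?thesis using q(2) yb pd gdist_sym[OF y c] gdist_sym[OF y z] gdist_sym[OF p c] gdist_sym[OF p z]
    by simp
qed

lemma branch_child:
  assumes z: "z \<in> V" and zc: "adj z c" and y: "y \<in> V" and yb: "gdist adj y c + 1 = gdist adj y z"
    and yx: "adj y x" and xd: "gdist adj z x = gdist adj z y + 1"
  shows "gdist adj x c + 1 = gdist adj x z"
proof -
  have c: "c \<in> V" and x: "x \<in> V" using adjV zc yx by auto
  have "gdist adj x c \<le> gdist adj x y + gdist adj y c" using gdist_tri x y c by blast
  moreover have "gdist adj x y = 1" using gdist_adj adj_sym yx by blast
  moreover have "gdist adj x z \<le> gdist adj x c + gdist adj c z" using gdist_tri x c z by blast
  moreover have "gdist adj c z = 1" using gdist_adj adj_sym zc by blast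
  ultimately show ?thesis using xd yb gdist_sym[OF x z] gdist_sym[OF y z] by simp
qed

lemma sep:
  assumes z: "z \<in> V" and zu: "adj z u" and zw: "adj z w" and uw: "u \<noteq> w"
    and x: "x \<in> V" and xb: "gdist adj x u + 1 = gdist adj x z"
  shows "y \<in> V \<Longrightarrow> gdist adj y w + 1 = gdist adj y z \<Longrightarrow> gdist adj x y = gdist adj x z + gdist adj z y"
proof (induction "gdist adj z y" arbitrary: y rule: less_induct)
  case less
  note y = less.prems(1) and yb = less.prems(2)
  have u: "u \<in> V" and w: "w \<in> V" using adjV zu zw by auto
  have yz: "y \<noteq> z" using yb by auto
  have xz: "x \<noteq> z" using xb by auto
  have uxp: "adj u z" "gdist adj x u + 1 = gdist adj x z" using adj_sym zu xb by auto
  show ?case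
  proof (cases "gdist adj z y = 1")
    case True
    hence "gdist adj y w = 0" using yb gdist_sym[OF y z] by simp
    hence yw: "y = w" using gdist_0_iff y w by auto
    have "gdist adj x w = gdist adj x z + 1"
    proof (rule child[OF x zw])
      fix t assume "adj t z" "gdist adj x t + 1 = gdist adj x z"
      hence "t = u" using parent_unique[OF x _ _ uxp] by blast
      thus "t \<noteq> w" using uw by simp
    qed
    thus ?thesis using yw True by simp
  next
    case False
    obtain p where p: "adj p y" "gdist adj z p + 1 = gdist adj z y" using par[OF z y yz] by blast
    have pV: "p \<in> V" using adjV p by auto
    have pz: "p \<noteq> z" using False p(2) by auto
    have pb: "gdist adj p w + 1 = gdist adj p z"
      using branch_parent[OF z zw y yb p pz] .
    have IHp: "gdist adj x p = gdist adj x z + gdist adj z p"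
      using less.hyps[OF _ pV pb] p(2) by simp
    obtain q where q: "adj q p" "gdist adj x q + 1 = gdist adj x p" "q \<noteq> y"
    proof (cases "gdist adj z p = 1")
      case True
      have "gdist adj p w = 0" using True pb gdist_sym[OF pV z] by simp
      hence "p = w" using gdist_0_iff[OF pV w] by simp
      hence "adj z p" "gdist adj x z + 1 = gdist adj x p"
        using IHp zw True by auto
      moreover have "z \<noteq> y" using yz by simp
      ultimately show ?thesis using that by blast
    next
      case False
      obtain q where q: "adj q p" "gdist adj z q + 1 = gdist adj z p" using par[OF z pV pz] by blast
      have qV: "q \<in> V" using adjV q by auto
      have qz: "q \<noteq> z" using False q(2) by auto
      have qb: "gdist adj q w + 1 = gdist adj q z"
        using branch_parent[OF z zw pV pb q qz] .
      have "gdist adj x q = gdist adj x z + gdist adj z q"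
        using less.hyps[OF _ qV qb] q(2) p(2) by simp
      hence "gdist adj x q + 1 = gdist adj x p" using IHp q(2) by simp
      moreover have "q \<noteq> y" using q(2) p(2) by auto
      ultimately show ?thesis using that q(1) by blast
    qed
    have "gdist adj x y = gdist adj x p + 1"
    proof (rule child[OF x p(1)])
      fix t assume "adj t p" "gdist adj x t + 1 = gdist adj x p"
      hence "t = q" using parent_unique[OF x _ _ q(1,2)] by blast
      thus "t \<noteq> y" using q(3) by simp
    qed
    thus ?thesis using IHp p(2) by simp
  qed
qed

end



lemma ex_max_nat: fixes f :: "'a \<Rightarrow> nat"
  assumes "finite S" "S \<noteq> {}" shows "\<exists>x\<in>S. \<forall>y\<in>S. f y \<le> f x"
proof -
  have "Max (f ` S) \<in> f ` S" using assms by simp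
  then obtain x where "x \<in> S" "f x = Max (f ` S)" by auto
  moreover have "\<forall>y\<in>S. f y \<le> Max (f ` S)" using assms by simp
  ultimately show ?thesis by metis
qed

context tree begin

lemma nbrs_fin: "finite {u. adj w u}"
  using finV adjV by (metis (mono_tags, lifting) mem_Collect_eq rev_finite_subset subsetI)

lemma only_major:
  assumes ex1: "ex_num V adj = 1" and ev: "exterior_major V adj v" and mw0: "major V adj w0"
  shows "w0 = v"
proof (rule ccontr)
  assume w0v: "w0 \<noteq> v"
  have vV: "v \<in> V" using ev unfolding exterior_major_def major_def by auto
  have w0V: "w0 \<in> V" using mw0 unfolding major_def by auto
  let ?M = "{w. major V adj w}"
  have finM: "finite ?M" using finV unfolding major_def by (simp add: Collect_conj_eq)
  obtain w where wM: "w \<in> ?M" and wmax: "\<And>w'. w' \<in> ?M \<Longrightarrow> gdist adj v w' \<le> gdist adj v w"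
    using ex_max_nat[OF finM, of "gdist adj v"] mw0 by blast
  have wV: "w \<in> V" using wM unfolding major_def by auto
  have "gdist adj v w0 > 0" using gdist_0_iff[OF vV w0V] w0v by auto
  hence wv: "w \<noteq> v" using wmax[of w0] mw0 by auto
  obtain q where q: "adj q w" "gdist adj v q + 1 = gdist adj v w" using par[OF vV wV] wv by blast
  have "card {u. adj w u} \<ge> 3" using wM unfolding major_def degree_def by auto
  hence "{u. adj w u} - {q} \<noteq> {}" using nbrs_fin
    by (metis One_nat_def card.empty card.insert empty_iff finite.intros(1) insert_Diff_single
        insert_absorb insert_is_Un not_less_eq_eq numeral_3_eq_3 sup_bot.right_neutral le_zero_eq
        Diff_empty card_insert_le_m1 diff_Suc_1 zero_less_Suc)
  then obtain c where wc: "adj w c" and cq: "c \<noteq> q" by blast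
  have cV: "c \<in> V" using adjV wc by auto
  let ?B = "{y \<in> V. gdist adj y c + 1 = gdist adj y w}"
  have cB: "c \<in> ?B" using cV gdist_adj[OF adj_sym[OF wc]] by simp
  have finB: "finite ?B" using finV by simp
  obtain l where lB: "l \<in> ?B" and lmax: "\<And>y. y \<in> ?B \<Longrightarrow> gdist adj w y \<le> gdist adj w l"
    using ex_max_nat[OF finB, of "gdist adj w"] cB by blast
  have lV: "l \<in> V" using lB by auto
  have lw: "l \<noteq> w" using lB by auto
  obtain pl where pl: "adj pl l" "gdist adj w pl + 1 = gdist adj w l" using par[OF wV lV lw] by blast
  have nb: "{z. adj l z} = {pl}"
  proof
    show "{pl} \<subseteq> {z. adj l z}" using pl adj_sym by auto
    show "{z. adj l z} \<subseteq> {pl}"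
    proof
      fix z assume "z \<in> {z. adj l z}"
      hence lz: "adj l z" by simp
      show "z \<in> {pl}"
      proof (cases "gdist adj w z = gdist adj w l + 1")
        case True
        hence "z \<in> ?B" using branch_child[OF wV wc lV _ lz] lB adjV lz by auto
        thus ?thesis using lmax True by fastforce
      next
        case False
        hence "gdist adj w z + 1 = gdist adj w l" using edge_levels[OF wV lz] by auto
        thus ?thesis using parent_unique[OF wV adj_sym[OF lz] _ pl] by simp
      qed
    qed
  qed
  have leafl: "leaf V adj l" unfolding leaf_def degree_def using nb lV by simp
  have qw: "q \<in> V" using adjV q by auto
  have vb: "gdist adj v q + 1 = gdist adj v w" using q by simp
  have termw: "terminal V adj w l"
    unfolding terminal_def
  proof (intro conjI allI impI)
    show "major V adj w" using wM by simp
    show "leaf V adj l" by (rule leafl)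
    fix w' assume "major V adj w' \<and> w' \<noteq> w"
    hence mw': "major V adj w'" and w'w: "w' \<noteq> w" by auto
    have w'V: "w' \<in> V" using mw' unfolding major_def by auto
    show "gdist adj l w < gdist adj l w'"
    proof (cases "w' \<in> ?B")
      case True
      have "gdist adj v w' = gdist adj v w + gdist adj w w'"
        using sep[OF wV adj_sym[OF q(1)] wc cq[symmetric] vV vb w'V] True by auto
      moreover have "gdist adj w w' > 0" using gdist_0_iff[OF wV w'V] w'w by auto
      ultimately show ?thesis using wmax[of w'] mw' by auto
    next
      case False
      obtain c' where c': "adj c' w" "gdist adj w' c' + 1 = gdist adj w' w"
        using par[OF w'V wV] w'w by blast
      have c'V: "c' \<in> V" using adjV c' by auto
      have "c' \<noteq> c"
        using False c' w'V gdist_sym[OF w'V c'V] gdist_sym[OF w'V wV] by auto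
      moreover have "gdist adj w' c' + 1 = gdist adj w' w" using c' by simp
      ultimately have "gdist adj l w' = gdist adj l w + gdist adj w w'"
        using sep[OF wV wc adj_sym[OF c'(1)] _ lV _ w'V] lB by auto
      moreover have "gdist adj w w' > 0" using gdist_0_iff[OF wV w'V] w'w by auto
      ultimately show ?thesis by simp
    qed
  qed
  hence "exterior_major V adj w" unfolding exterior_major_def using wM by auto
  moreover have "card {v. exterior_major V adj v} = 1" using ex1 unfolding ex_num_def .
  ultimately show False using ev wv by (metis (mono_tags, lifting) card_1_singletonE mem_Collect_eq singletonD)
qed

end



locale spider = tree +
  fixes v :: 'a
  assumes vV: "v \<in> V" and majv: "major V adj v"
    and nomaj: "\<And>w. major V adj w \<Longrightarrow> w = v"
begin

definition N where "N = {u. adj v u}"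
definition Br where "Br u = {x \<in> V. gdist adj x u + 1 = gdist adj x v}"
definition dep where "dep x = gdist adj v x"

lemma finN: "finite N" unfolding N_def by (rule nbrs_fin)
lemma cardN: "card N \<ge> 3" using majv unfolding major_def degree_def N_def by simp
lemma NV: "u \<in> N \<Longrightarrow> u \<in> V" unfolding N_def using adjV by auto
lemma BrV: "x \<in> Br u \<Longrightarrow> x \<in> V" unfolding Br_def by auto

lemma deg2: assumes "x \<in> V" "x \<noteq> v" shows "card {u. adj x u} \<le> 2"
proof -
  have "\<not> 3 \<le> card {u. adj x u}" using nomaj[of x] assms unfolding major_def degree_def by blast
  thus ?thesis by simp
qed

lemma br_ex: assumes "x \<in> V" "x \<noteq> v" shows "\<exists>u\<in>N. x \<in> Br u"
proof -
  obtain p where "adj p v" "gdist adj x p + 1 = gdist adj x v" using par[OF assms(1) vV] assms(2) by blast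
  thus ?thesis unfolding N_def Br_def using adj_sym assms(1) by blast
qed

lemma br_unique: assumes "u \<in> N" "w \<in> N" "x \<in> Br u" "x \<in> Br w" shows "u = w"
  using assms parent_unique[of x u v w] adj_sym unfolding N_def Br_def by auto

lemma v_notin: "v \<notin> Br u" unfolding Br_def by auto

lemma self_br: "u \<in> N \<Longrightarrow> u \<in> Br u"
  unfolding Br_def N_def using gdist_adj[of u v] adj_sym adjV by auto

lemma dep_br: "x \<in> Br u \<Longrightarrow> dep x = gdist adj x u + 1"
  unfolding Br_def dep_def using gdist_sym vV by auto

lemma dep_pos: "x \<in> Br u \<Longrightarrow> dep x \<ge> 1" using dep_br by simp

lemma dep_N: "u \<in> N \<Longrightarrow> dep u = 1" unfolding dep_def N_def using gdist_adj by simp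

lemma gdist_v: "x \<in> V \<Longrightarrow> gdist adj x v = dep x" unfolding dep_def using gdist_sym vV by auto

lemma dist_diff: assumes "u \<in> N" "w \<in> N" "u \<noteq> w" "x \<in> Br u" "y \<in> Br w"
  shows "gdist adj x y = dep x + dep y"
proof -
  have vu: "adj v u" and vw: "adj v w" using assms(1,2) unfolding N_def by auto
  have xV: "x \<in> V" and xb: "gdist adj x u + 1 = gdist adj x v" using assms(4) unfolding Br_def by auto
  have yV: "y \<in> V" and yb: "gdist adj y w + 1 = gdist adj y v" using assms(5) unfolding Br_def by auto
  have "gdist adj x y = gdist adj x v + gdist adj v y" by (rule sep[OF vV vu vw assms(3) xV xb yV yb])
  thus ?thesis using gdist_v[OF xV] unfolding dep_def by simp
qed

lemma br_par: assumes "u \<in> N" "x \<in> Br u" "dep x \<ge> 2" "adj p x" "dep p + 1 = dep x"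
  shows "p \<in> Br u"
proof -
  have pv: "p \<noteq> v" using assms(3,5) unfolding dep_def by auto
  have vu: "adj v u" using assms(1) unfolding N_def by auto
  have xV: "x \<in> V" and xb: "gdist adj x u + 1 = gdist adj x v" using assms(2) unfolding Br_def by auto
  have pd: "gdist adj v p + 1 = gdist adj v x" using assms(5) unfolding dep_def .
  have "gdist adj p u + 1 = gdist adj p v" by (rule branch_parent[OF vV vu xV xb assms(4) pd pv])
  moreover have "p \<in> V" using adjV assms(4) by auto
  ultimately show ?thesis unfolding Br_def by auto
qed

lemma br_child: assumes "u \<in> N" "x \<in> Br u" "adj x z" "dep z = dep x + 1"
  shows "z \<in> Br u"
proof -
  have vu: "adj v u" using assms(1) unfolding N_def by auto
  have xV: "x \<in> V" and xb: "gdist adj x u + 1 = gdist adj x v" using assms(2) unfolding Br_def by auto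
  have zd: "gdist adj v z = gdist adj v x + 1" using assms(4) unfolding dep_def .
  have "gdist adj z u + 1 = gdist adj z v" by (rule branch_child[OF vV vu xV xb assms(3) zd])
  moreover have "z \<in> V" using adjV assms(3) by auto
  ultimately show ?thesis unfolding Br_def by auto
qed

lemma dep1: assumes "u \<in> N" "x \<in> Br u" "dep x = 1" shows "x = u"
proof -
  have "gdist adj x u = 0" using dep_br[OF assms(2)] assms(3) by simp
  thus ?thesis using gdist_0_iff[OF BrV[OF assms(2)] NV[OF assms(1)]] by simp
qed

lemma parv: "x \<in> V \<Longrightarrow> x \<noteq> v \<Longrightarrow> adj (par v x) x \<and> dep (par v x) + 1 = dep x"
  using par[OF vV] unfolding dep_def by blast

lemma same_dep_aux: assumes u: "u \<in> N"
  shows "x \<in> Br u \<Longrightarrow> y \<in> Br u \<Longrightarrow> dep x = n \<Longrightarrow> dep y = n \<Longrightarrow> x = y"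
proof (induction n arbitrary: x y rule: less_induct)
  case (less n)
  show ?case
  proof (cases "n = 1")
    case True thus ?thesis using dep1[OF u] less.prems by metis
  next
    case False
    hence n2: "n \<ge> 2" using dep_pos less.prems by fastforce
    have xV: "x \<in> V" "x \<noteq> v" and yV: "y \<in> V" "y \<noteq> v" using less.prems BrV v_notin by auto
    define px where "px = par v x"
    define py where "py = par v y"
    have px: "adj px x" "dep px + 1 = dep x" using parv[OF xV] px_def by auto
    have py: "adj py y" "dep py + 1 = dep y" using parv[OF yV] py_def by auto
    have pxB: "px \<in> Br u" using br_par[OF u less.prems(1) _ px] n2 less.prems by auto
    have pyB: "py \<in> Br u" using br_par[OF u less.prems(2) _ py] n2 less.prems by auto
    have "px = py" using less.IH[OF _ pxB pyB] px py less.prems by auto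
    have pV: "px \<in> V" "px \<noteq> v" using pxB BrV v_notin by auto
    define q where "q = par v px"
    have q: "adj q px" "dep q + 1 = dep px" using parv[OF pV] q_def by auto
    show "x = y"
    proof (rule ccontr)
      assume xy: "x \<noteq> y"
      have "q \<noteq> x" "q \<noteq> y" using q px py less.prems by auto
      hence "card {q, x, y} = 3" using xy by auto
      moreover have "{q, x, y} \<subseteq> {t. adj px t}"
        using q px py \<open>px = py\<close> adj_sym by auto
      ultimately have "card {t. adj px t} \<ge> 3" using nbrs_fin card_mono by metis
      thus False using deg2[OF pV] by simp
    qed
  qed
qed

lemma same_dep: "u \<in> N \<Longrightarrow> x \<in> Br u \<Longrightarrow> y \<in> Br u \<Longrightarrow> dep x = dep y \<Longrightarrow> x = y"
  using same_dep_aux by blast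

lemma ancestor: assumes u: "u \<in> N"
  shows "x \<in> Br u \<Longrightarrow> dep x = a + k \<Longrightarrow> a \<ge> 1 \<Longrightarrow> \<exists>z\<in>Br u. dep z = a \<and> gdist adj z x = k"
proof (induction k arbitrary: x)
  case 0 thus ?case by (intro bexI[of _ x]) auto
next
  case (Suc k)
  have xV: "x \<in> V" "x \<noteq> v" using Suc.prems BrV v_notin by auto
  define p where "p = par v x"
  have p: "adj p x" "dep p + 1 = dep x" using parv[OF xV] p_def by auto
  have pB: "p \<in> Br u" using br_par[OF u Suc.prems(1) _ p] Suc.prems by auto
  obtain z where z: "z \<in> Br u" "dep z = a" "gdist adj z p = k" using Suc.IH[OF pB] p Suc.prems by auto
  have zV: "z \<in> V" and pV: "p \<in> V" using z pB BrV by auto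
  have "gdist adj z x \<le> gdist adj z p + gdist adj p x" using gdist_tri zV pV xV by blast
  hence "gdist adj z x \<le> Suc k" using gdist_adj[OF p(1)] z by simp
  moreover have "gdist adj v x \<le> gdist adj v z + gdist adj z x" using gdist_tri vV zV xV by blast
  ultimately have "gdist adj z x = Suc k" using z Suc.prems unfolding dep_def by simp
  thus ?case using z by auto
qed

lemma dist_same: assumes "u \<in> N" "x \<in> Br u" "y \<in> Br u" "dep x \<le> dep y"
  shows "gdist adj x y = dep y - dep x"
proof -
  obtain z where z: "z \<in> Br u" "dep z = dep x" "gdist adj z y = dep y - dep x"
    using ancestor[OF assms(1,3), of "dep x" "dep y - dep x"] assms dep_pos by auto
  thus ?thesis using same_dep[OF assms(1) z(1) assms(2) z(2)] by simp
qed

lemma v_not_leaf: "\<not> leaf V adj v" using majv unfolding leaf_def major_def by auto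

lemma leaf_br: "leaf V adj l \<Longrightarrow> \<exists>u\<in>N. l \<in> Br u"
  using br_ex v_not_leaf unfolding leaf_def by blast

lemma leaf_max: assumes u: "u \<in> N" and l: "l \<in> Br u" "leaf V adj l" and x: "x \<in> Br u"
  shows "dep x \<le> dep l"
proof (rule ccontr)
  assume "\<not> dep x \<le> dep l"
  then obtain z where z: "z \<in> Br u" "dep z = dep l + 1"
    using ancestor[OF u x, of "dep l + 1" "dep x - dep l - 1"] by auto
  have zV: "z \<in> V" "z \<noteq> v" using z BrV v_notin by auto
  define p where "p = par v z"
  have p: "adj p z" "dep p + 1 = dep z" using parv[OF zV] p_def by auto
  have "dep z \<ge> 2" using z dep_pos l by fastforce
  hence pB: "p \<in> Br u" using br_par[OF u z(1) _ p] by auto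
  hence "p = l" using same_dep[OF u pB l(1)] p z by simp
  have lV: "l \<in> V" "l \<noteq> v" using l BrV v_notin by auto
  define q where "q = par v l"
  have q: "adj q l" "dep q + 1 = dep l" using parv[OF lV] q_def by auto
  have "q \<noteq> z" using q z by auto
  hence "card {q, z} = 2" by simp
  moreover have "{q, z} \<subseteq> {t. adj l t}" using q p \<open>p = l\<close> adj_sym by auto
  ultimately have "card {t. adj l t} \<ge> 2" using nbrs_fin card_mono by metis
  thus False using l unfolding leaf_def degree_def by simp
qed

lemma leaf_ex: assumes u: "u \<in> N" shows "\<exists>l\<in>Br u. leaf V adj l"
proof -
  have fin: "finite (Br u)" using finV unfolding Br_def by simp
  obtain x where xB: "x \<in> Br u" and xmax: "\<And>y. y \<in> Br u \<Longrightarrow> dep y \<le> dep x"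
    using ex_max_nat[OF fin, of dep] self_br[OF u] by blast
  have xV: "x \<in> V" "x \<noteq> v" using xB BrV v_notin by auto
  define p where "p = par v x"
  have p: "adj p x" "dep p + 1 = dep x" using parv[OF xV] p_def by auto
  have "{t. adj x t} = {p}"
  proof
    show "{p} \<subseteq> {t. adj x t}" using p adj_sym by auto
    show "{t. adj x t} \<subseteq> {p}"
    proof
      fix z assume "z \<in> {t. adj x t}"
      hence xz: "adj x z" by simp
      show "z \<in> {p}"
      proof (cases "dep z = dep x + 1")
        case True
        hence "z \<in> Br u" using br_child[OF u xB xz] by simp
        thus ?thesis using xmax True by fastforce
      next
        case False
        hence "dep z + 1 = dep x" using edge_levels[OF vV xz] unfolding dep_def by auto
        thus ?thesis using parent_unique[OF vV adj_sym[OF xz] _ p(1)] p(2) unfolding dep_def by simp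
      qed
    qed
  qed
  thus ?thesis using xB xV unfolding leaf_def degree_def by auto
qed

lemma leaf_unique: assumes "u \<in> N" "l1 \<in> Br u" "leaf V adj l1" "l2 \<in> Br u" "leaf V adj l2"
  shows "l1 = l2"
  using leaf_max[OF assms(1,2,3,4)] leaf_max[OF assms(1,4,5,2)] same_dep[OF assms(1,2,4)] by simp

definition lf where "lf u = (SOME l. l \<in> Br u \<and> leaf V adj l)"

lemma lf: "u \<in> N \<Longrightarrow> lf u \<in> Br u \<and> leaf V adj (lf u)"
  unfolding lf_def using leaf_ex by (metis (no_types, lifting) someI_ex)

lemma lf_eq: "u \<in> N \<Longrightarrow> l \<in> Br u \<Longrightarrow> leaf V adj l \<Longrightarrow> lf u = l"
  using lf leaf_unique by blast

lemma dep_le_lf: "u \<in> N \<Longrightarrow> x \<in> Br u \<Longrightarrow> dep x \<le> dep (lf u)"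
  using leaf_max lf by blast

end



lemma pair_sum_bound:
  fixes s :: "'b \<Rightarrow> real"
  assumes fin: "finite I" and c2: "card I \<ge> 2" and nn: "\<And>i. i \<in> I \<Longrightarrow> s i \<ge> 0"
    and pr: "\<And>i j. i \<in> I \<Longrightarrow> j \<in> I \<Longrightarrow> i \<noteq> j \<Longrightarrow> s i + s j \<ge> 1"
  shows "sum s I \<ge> card I / 2"
proof (cases "\<forall>i\<in>I. s i \<ge> 1/2")
  case True
  hence "sum (\<lambda>_. 1/2) I \<le> sum s I" by (intro sum_mono) auto
  thus ?thesis by simp
next
  case False
  then obtain m where m: "m \<in> I" "s m < 1/2" by auto
  have "sum (\<lambda>_. 1 - s m) (I - {m}) \<le> sum s (I - {m})"
    using pr[of m] m by (intro sum_mono) (auto simp: algebra_simps)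
  hence "(card I - 1) * (1 - s m) \<le> sum s (I - {m})" using m fin by (simp add: card_Diff_singleton)
  moreover have "sum s I = s m + sum s (I - {m})" using m fin by (simp add: sum.remove)
  moreover have "real (card I - 1) = real (card I) - 1" using c2 by simp
  moreover have "(real (card I) - 2) * (1/2 - s m) \<ge> 0" using c2 m by (intro mult_nonneg_nonneg) auto
  ultimately show ?thesis by (auto simp: algebra_simps)
qed

lemma tdist_ne: "a \<le> K \<Longrightarrow> a \<noteq> b \<Longrightarrow> min a (K + 1) \<noteq> min (b::nat) (K + 1)"
  by auto

lemma Rset_k_sub: "Rset_k V adj k x y \<subseteq> Rset V adj x y"
  unfolding Rset_k_def Rset_def tdist_def by auto

lemma kres_res: "k_resolving_fun V adj k h \<Longrightarrow> finite V \<Longrightarrow> resolving_fun V adj h"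
  unfolding k_resolving_fun_def resolving_fun_def
proof (intro conjI ballI impI; (elim conjE)?)
  fix x y assume h: "\<forall>s\<in>V. 0 \<le> h s \<and> h s \<le> 1"
    and k: "\<forall>x\<in>V. \<forall>y\<in>V. x \<noteq> y \<longrightarrow> 1 \<le> sum h (Rset_k V adj k x y)"
    and fin: "finite V" and xy: "x \<in> V" "y \<in> V" "x \<noteq> y"
  have "sum h (Rset_k V adj k x y) \<le> sum h (Rset V adj x y)"
    using h fin by (intro sum_mono2) (auto simp: Rset_def Rset_k_def tdist_def)
  thus "1 \<le> sum h (Rset V adj x y)" using k xy by fastforce
qed auto

context spider begin

lemma Br_disj: "u \<in> N \<Longrightarrow> w \<in> N \<Longrightarrow> u \<noteq> w \<Longrightarrow> Br u \<inter> Br w = {}"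
  using br_unique by blast

lemma finBr: "finite (Br u)" using finV unfolding Br_def by simp

lemma V_decomp: "V = insert v (\<Union>u\<in>N. Br u)"
  using br_ex vV BrV by auto

lemma sum_decomp: "sum h V = h v + (\<Sum>u\<in>N. sum h (Br u))"
proof -
  have "sum h V = h v + sum h (\<Union>u\<in>N. Br u)"
    by (subst V_decomp) (simp add: finN finBr v_notin)
  also have "sum h (\<Union>u\<in>N. Br u) = (\<Sum>u\<in>N. sum h (Br u))"
    by (rule sum.UNION_disjoint) (auto simp: finN finBr dest: br_unique)
  finally show ?thesis .
qed

lemma sum_nonneg_V: "\<forall>s\<in>V. 0 \<le> h s \<Longrightarrow> A \<subseteq> V \<Longrightarrow> sum (h::'a\<Rightarrow>real) A \<ge> 0"
  by (intro sum_nonneg) auto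

lemma lower_bound: assumes h: "resolving_fun V adj h" shows "sum h V \<ge> card N / 2"
proof -
  have nn: "\<forall>s\<in>V. 0 \<le> h s" using h unfolding resolving_fun_def by auto
  have pair: "sum h (Br u) + sum h (Br w) \<ge> 1" if uw: "u \<in> N" "w \<in> N" "u \<noteq> w" for u w
  proof -
    have sub: "Rset V adj u w \<subseteq> Br u \<union> Br w"
    proof
      fix z assume z: "z \<in> Rset V adj u w"
      hence zV: "z \<in> V" and ne: "gdist adj u z \<noteq> gdist adj w z" unfolding Rset_def by auto
      show "z \<in> Br u \<union> Br w"
      proof (rule ccontr)
        assume nz: "z \<notin> Br u \<union> Br w"
        show False
        proof (cases "z = v")
          case True thus False using ne gdist_v NV uw dep_N by auto
        next
          case False
          then obtain m where m: "m \<in> N" "z \<in> Br m" using br_ex zV by blast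
          have "m \<noteq> u" "m \<noteq> w" using m nz by auto
          hence "gdist adj u z = dep u + dep z" "gdist adj w z = dep w + dep z"
            using dist_diff[OF uw(1) m(1) _ self_br[OF uw(1)] m(2)]
              dist_diff[OF uw(2) m(1) _ self_br[OF uw(2)] m(2)] by auto
          thus False using ne dep_N uw by simp
        qed
      qed
    qed
    have "1 \<le> sum h (Rset V adj u w)" using h uw NV unfolding resolving_fun_def by auto
    also have "\<dots> \<le> sum h (Br u \<union> Br w)"
      using sub nn BrV by (intro sum_mono2) (auto simp: finBr)
    also have "\<dots> = sum h (Br u) + sum h (Br w)"
      using Br_disj[OF uw] by (simp add: finBr sum.union_disjoint)
    finally show ?thesis .
  qed
  have "(\<Sum>u\<in>N. sum h (Br u)) \<ge> card N / 2"
    using pair cardN finN nn BrV by (intro pair_sum_bound) (auto intro!: sum_nonneg)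
  moreover have "h v \<ge> 0" using nn vV by auto
  ultimately show ?thesis using sum_decomp[of h] by simp
qed

lemma long_leg_bound:
  assumes h: "k_resolving_fun V adj K h" and K: "K \<ge> 1"
    and l: "leaf V adj l" and ld: "dep l \<ge> K + 1"
  shows "sum h V \<ge> card N / 2 + 1/2"
proof -
  have nn: "\<forall>s\<in>V. 0 \<le> h s" using h unfolding k_resolving_fun_def by auto
  obtain u where u: "u \<in> N" "l \<in> Br u" using leaf_br[OF l] by blast
  have lV: "l \<in> V" "l \<noteq> v" using u BrV v_notin by auto
  define p where "p = par v l"
  have p: "adj p l" "dep p + 1 = dep l" using parv[OF lV] p_def by auto
  have pB: "p \<in> Br u" using br_par[OF u(1) u(2) _ p] ld K by auto
  have pl: "p \<noteq> l" using p by auto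
  have sub: "Rset_k V adj K p l \<subseteq> insert v (Br u)"
  proof
    fix z assume z: "z \<in> Rset_k V adj K p l"
    hence zV: "z \<in> V" and ne: "tdist adj K p z \<noteq> tdist adj K l z" unfolding Rset_k_def by auto
    show "z \<in> insert v (Br u)"
    proof (rule ccontr)
      assume nz: "z \<notin> insert v (Br u)"
      then obtain m where m: "m \<in> N" "z \<in> Br m" using br_ex zV by blast
      have "m \<noteq> u" using m nz by auto
      hence "gdist adj p z = dep p + dep z" "gdist adj l z = dep l + dep z"
        using dist_diff[OF u(1) m(1) _ pB m(2)] dist_diff[OF u(1) m(1) _ u(2) m(2)] by auto
      moreover have "dep z \<ge> 1" using dep_pos m by blast
      ultimately show False using ne ld p unfolding tdist_def by auto
    qed
  qed
  have "1 \<le> sum h (Rset_k V adj K p l)" using h pB u BrV pl unfolding k_resolving_fun_def by auto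
  also have "\<dots> \<le> sum h (insert v (Br u))"
    using sub nn BrV vV by (intro sum_mono2) (auto simp: finBr)
  also have "\<dots> = h v + sum h (Br u)" using v_notin by (simp add: finBr)
  finally have one: "h v + sum h (Br u) \<ge> 1" .
  have rest: "(\<Sum>w\<in>N - {u}. sum h (Br w)) \<ge> card (N - {u}) / 2"
  proof (rule pair_sum_bound)
    show "finite (N - {u})" using finN by simp
    show "card (N - {u}) \<ge> 2" using cardN u finN by (simp add: card_Diff_singleton)
    show "\<And>i. i \<in> N - {u} \<Longrightarrow> 0 \<le> sum h (Br i)" using nn BrV by (auto intro!: sum_nonneg)
    fix i j assume ij: "i \<in> N - {u}" "j \<in> N - {u}" "i \<noteq> j"
    have sub: "Rset V adj i j \<subseteq> Br i \<union> Br j"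
    proof
      fix z assume z: "z \<in> Rset V adj i j"
      hence zV: "z \<in> V" and ne: "gdist adj i z \<noteq> gdist adj j z" unfolding Rset_def by auto
      show "z \<in> Br i \<union> Br j"
      proof (rule ccontr)
        assume nz: "z \<notin> Br i \<union> Br j"
        show False
        proof (cases "z = v")
          case True thus False using ne gdist_v NV ij dep_N by auto
        next
          case False
          then obtain m where m: "m \<in> N" "z \<in> Br m" using br_ex zV by blast
          have "m \<noteq> i" "m \<noteq> j" using m nz by auto
          hence "gdist adj i z = dep i + dep z" "gdist adj j z = dep j + dep z"
            using dist_diff[of i m, OF _ m(1) _ self_br m(2)]
              dist_diff[of j m, OF _ m(1) _ self_br m(2)] ij by auto
          thus False using ne dep_N ij by simp
        qed
      qed
    qed
    have hr: "resolving_fun V adj h" using kres_res[OF h finV] .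
    have "1 \<le> sum h (Rset V adj i j)" using hr ij NV unfolding resolving_fun_def by auto
    also have "\<dots> \<le> sum h (Br i \<union> Br j)"
      using sub nn BrV by (intro sum_mono2) (auto simp: finBr)
    also have "\<dots> = sum h (Br i) + sum h (Br j)"
      using Br_disj ij by (simp add: finBr sum.union_disjoint)
    finally show "1 \<le> sum h (Br i) + sum h (Br j)" .
  qed
  have "(\<Sum>w\<in>N. sum h (Br w)) = sum h (Br u) + (\<Sum>w\<in>N - {u}. sum h (Br w))"
    using u finN by (simp add: sum.remove)
  moreover have "real (card (N - {u})) = real (card N) - 1" using u finN cardN by (simp add: card_Diff_singleton)
  ultimately show ?thesis using sum_decomp[of h] one rest by (simp add: algebra_simps)
qed

end



context spider begin

definition g4 :: "'a \<Rightarrow> real" where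
  "g4 x = (if adj v x then 1/4 else 0) + (if leaf V adj x then 1/4 else 0)"

lemma g4_nn: "g4 x \<ge> 0" and g4_le: "g4 x \<le> 1" unfolding g4_def by auto

lemma leaves_eq: "{x \<in> V. leaf V adj x} = lf ` N"
proof
  show "{x \<in> V. leaf V adj x} \<subseteq> lf ` N"
  proof
    fix x assume "x \<in> {x \<in> V. leaf V adj x}"
    hence l: "leaf V adj x" by auto
    then obtain u where "u \<in> N" "x \<in> Br u" using leaf_br by blast
    thus "x \<in> lf ` N" using lf_eq l by blast
  qed
  show "lf ` N \<subseteq> {x \<in> V. leaf V adj x}" using lf BrV by auto
qed

lemma card_leaves: "card {x \<in> V. leaf V adj x} = card N"
proof -
  have "inj_on lf N"
  proof (rule inj_onI)
    fix u w assume "u \<in> N" "w \<in> N" "lf u = lf w"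
    thus "u = w" using lf br_unique by metis
  qed
  thus ?thesis using leaves_eq card_image by metis
qed

lemma sum_g4: "sum g4 V = card N / 2"
proof -
  have "sum g4 V = sum (\<lambda>x. if adj v x then 1/4 else 0) V + sum (\<lambda>x. if leaf V adj x then 1/4 else 0) V"
    unfolding g4_def by (simp add: sum.distrib)
  also have "sum (\<lambda>x. if adj v x then (1/4::real) else 0) V = card (V \<inter> {x. adj v x}) / 4"
    by (simp add: sum.If_cases finV)
  also have "V \<inter> {x. adj v x} = N" unfolding N_def using adjV by auto
  also have "sum (\<lambda>x. if leaf V adj x then (1/4::real) else 0) V = card (V \<inter> {x. leaf V adj x}) / 4"
    by (simp add: sum.If_cases finV)
  also have "V \<inter> {x. leaf V adj x} = {x \<in> V. leaf V adj x}" by auto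
  finally show ?thesis using card_leaves by simp
qed

lemma g4_decomp: assumes "R \<subseteq> V" shows "(\<Sum>m\<in>N. sum g4 (R \<inter> Br m)) \<le> sum g4 R"
proof -
  have "(\<Sum>m\<in>N. sum g4 (R \<inter> Br m)) = sum g4 (\<Union>m\<in>N. R \<inter> Br m)"
    by (rule sum.UNION_disjoint[symmetric]) (auto simp: finN finBr dest: br_unique)
  also have "\<dots> \<le> sum g4 R"
    using assms finV by (intro sum_mono2) (auto simp: g4_nn intro: finite_subset)
  finally show ?thesis .
qed

lemma cb_nn: "sum g4 (R \<inter> Br m) \<ge> 0" by (intro sum_nonneg) (simp add: g4_nn)

lemma cb_m: assumes "m \<in> N" "m \<in> R" shows "sum g4 (R \<inter> Br m) \<ge> 1/4"
proof -
  have "g4 m \<ge> 1/4" using assms unfolding g4_def N_def by auto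
  also have "g4 m \<le> sum g4 (R \<inter> Br m)"
    using assms self_br finBr by (intro member_le_sum) (auto simp: g4_nn)
  finally show ?thesis .
qed

lemma cb_lf: assumes "m \<in> N" "lf m \<in> R" shows "sum g4 (R \<inter> Br m) \<ge> 1/4"
proof -
  have "g4 (lf m) \<ge> 1/4" using assms lf unfolding g4_def by auto
  also have "g4 (lf m) \<le> sum g4 (R \<inter> Br m)"
    using assms lf finBr by (intro member_le_sum) (auto simp: g4_nn)
  finally show ?thesis .
qed

lemma cb_both: assumes m: "m \<in> N" "m \<in> R" "lf m \<in> R" shows "sum g4 (R \<inter> Br m) \<ge> 1/2"
proof (cases "lf m = m")
  case True
  have "g4 m \<ge> 1/2" using m lf[OF m(1)] True unfolding g4_def N_def by auto
  also have "g4 m \<le> sum g4 (R \<inter> Br m)"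
    using m self_br finBr by (intro member_le_sum) (auto simp: g4_nn)
  finally show ?thesis .
next
  case False
  have "g4 m \<ge> 1/4" "g4 (lf m) \<ge> 1/4" using m lf[OF m(1)] unfolding g4_def N_def by auto
  hence "1/2 \<le> sum g4 {m, lf m}" using False by simp
  also have "\<dots> \<le> sum g4 (R \<inter> Br m)"
    using m self_br lf finBr by (intro sum_mono2) (auto simp: g4_nn)
  finally show ?thesis .
qed

lemma sum2: assumes "R \<subseteq> V" "i \<in> N" "j \<in> N" "i \<noteq> j"
  shows "sum g4 (R \<inter> Br i) + sum g4 (R \<inter> Br j) \<le> sum g4 R"
proof -
  have "(\<Sum>m\<in>{i,j}. sum g4 (R \<inter> Br m)) \<le> (\<Sum>m\<in>N. sum g4 (R \<inter> Br m))"
    using assms finN by (intro sum_mono2) (auto simp: cb_nn)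
  thus ?thesis using g4_decomp[OF assms(1)] assms by simp
qed

lemma sum3: assumes "R \<subseteq> V" "i \<in> N" "j \<in> N" "m \<in> N" "i \<noteq> j" "i \<noteq> m" "j \<noteq> m"
  shows "sum g4 (R \<inter> Br i) + sum g4 (R \<inter> Br j) + sum g4 (R \<inter> Br m) \<le> sum g4 R"
proof -
  have "(\<Sum>t\<in>{i,j,m}. sum g4 (R \<inter> Br t)) \<le> (\<Sum>t\<in>N. sum g4 (R \<inter> Br t))"
    using assms finN by (intro sum_mono2) (auto simp: cb_nn)
  thus ?thesis using g4_decomp[OF assms(1)] assms by simp
qed

lemma third: "i \<in> N \<Longrightarrow> j \<in> N \<Longrightarrow> \<exists>m\<in>N. m \<noteq> i \<and> m \<noteq> j"
proof (rule ccontr)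
  assume "i \<in> N" "j \<in> N" "\<not> (\<exists>m\<in>N. m \<noteq> i \<and> m \<noteq> j)"
  hence "N \<subseteq> {i, j}" by auto
  hence "card N \<le> card {i, j}" by (intro card_mono) auto
  also have "card {i, j} \<le> 2" by (cases "i = j") auto
  finally have "card N \<le> 2" .
  thus False using cardN by simp
qed

lemma two_others: "i \<in> N \<Longrightarrow> \<exists>m1\<in>N. \<exists>m2\<in>N. m1 \<noteq> i \<and> m2 \<noteq> i \<and> m1 \<noteq> m2"
  using third by metis

end



context spider begin

lemma dsame: assumes "u \<in> N" "x \<in> Br u" "y \<in> Br u"
  shows "gdist adj x y = (if dep x \<le> dep y then dep y - dep x else dep x - dep y)"
proof (cases "dep x \<le> dep y")
  case True thus ?thesis using dist_same[OF assms True] by simp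
next
  case False
  hence "gdist adj y x = dep x - dep y" using dist_same[OF assms(1,3,2)] by simp
  thus ?thesis using False gdist_sym[OF BrV[OF assms(2)] BrV[OF assms(3)]] by simp
qed

lemma Rk_sym: "Rset_k V adj K x y = Rset_k V adj K y x"
  unfolding Rset_k_def by auto

lemma Rk_sub: "Rset_k V adj K x y \<subseteq> V" unfolding Rset_k_def by auto

lemma memx: "z \<in> V \<Longrightarrow> gdist adj x z \<le> K \<Longrightarrow> gdist adj x z \<noteq> gdist adj y z \<Longrightarrow> z \<in> Rset_k V adj K x y"
  unfolding Rset_k_def tdist_def by auto

lemma memy: "z \<in> V \<Longrightarrow> gdist adj y z \<le> K \<Longrightarrow> gdist adj x z \<noteq> gdist adj y z \<Longrightarrow> z \<in> Rset_k V adj K x y"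
  unfolding Rset_k_def tdist_def by auto

context
  fixes K :: nat
  assumes K1: "K \<ge> 1" and LK: "\<And>m. m \<in> N \<Longrightarrow> dep (lf m) \<le> K"
begin

lemma caseA: assumes i: "i \<in> N" and y: "y \<in> Br i"
  shows "1 \<le> sum g4 (Rset_k V adj K v y)"
proof -
  let ?R = "Rset_k V adj K v y"
  obtain m1 m2 where m: "m1 \<in> N" "m2 \<in> N" "m1 \<noteq> i" "m2 \<noteq> i" "m1 \<noteq> m2" using two_others[OF i] by blast
  have dy: "dep y \<ge> 1" using dep_pos y by blast
  have both: "m \<in> ?R \<and> lf m \<in> ?R" if mm: "m \<in> N" "m \<noteq> i" for m
  proof
    have "gdist adj y m = dep y + dep m" using dist_diff[OF i mm(1) mm(2)[symmetric] y self_br[OF mm(1)]] .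
    moreover have "gdist adj v m = 1" using dep_N[OF mm(1)] unfolding dep_def .
    ultimately show "m \<in> ?R" using memx[of m v K y] NV[OF mm(1)] dep_N[OF mm(1)] dy K1 by simp
    have lfm: "lf m \<in> Br m" using lf[OF mm(1)] by simp
    have "gdist adj y (lf m) = dep y + dep (lf m)" using dist_diff[OF i mm(1) mm(2)[symmetric] y lfm] .
    moreover have "gdist adj v (lf m) = dep (lf m)" unfolding dep_def ..
    ultimately show "lf m \<in> ?R" using memx[of "lf m" v K y] BrV[OF lfm] LK[OF mm(1)] dy by simp
  qed
  have "1/2 \<le> sum g4 (?R \<inter> Br m1)" using cb_both[OF m(1)] both[OF m(1,3)] by blast
  moreover have "1/2 \<le> sum g4 (?R \<inter> Br m2)" using cb_both[OF m(2)] both[OF m(2,4)] by blast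
  moreover have "sum g4 (?R \<inter> Br m1) + sum g4 (?R \<inter> Br m2) \<le> sum g4 ?R"
    using sum2[OF Rk_sub m(1,2,5)] .
  ultimately show ?thesis by simp
qed

lemma caseB: assumes i: "i \<in> N" and x: "x \<in> Br i" and y: "y \<in> Br i" and lt: "dep x < dep y"
  shows "1 \<le> sum g4 (Rset_k V adj K x y)"
proof -
  let ?R = "Rset_k V adj K x y"
  obtain m1 m2 where m: "m1 \<in> N" "m2 \<in> N" "m1 \<noteq> i" "m2 \<noteq> i" "m1 \<noteq> m2" using two_others[OF i] by blast
  have dx: "dep x \<ge> 1" using dep_pos x by blast
  have yL: "dep y \<le> dep (lf i)" using dep_le_lf[OF i y] .
  have LKi: "dep (lf i) \<le> K" using LK[OF i] .
  have ii: "i \<in> Br i" using self_br[OF i] .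
  have lfi: "lf i \<in> Br i" using lf[OF i] by simp
  have "i \<in> ?R"
  proof (rule memx)
    show "i \<in> V" using NV[OF i] .
    show "gdist adj x i \<le> K" using dsame[OF i x ii] dep_N[OF i] yL LKi lt K1 by (auto split: if_splits)
    show "gdist adj x i \<noteq> gdist adj y i" using dsame[OF i x ii] dsame[OF i y ii] dep_N[OF i] dx lt K1 by (auto split: if_splits)
  qed
  moreover have "lf i \<in> ?R"
  proof (rule memx)
    show "lf i \<in> V" using BrV[OF lfi] .
    show "gdist adj x (lf i) \<le> K" using dsame[OF i x lfi] yL LKi lt K1 by (auto split: if_splits)
    show "gdist adj x (lf i) \<noteq> gdist adj y (lf i)" using dsame[OF i x lfi] dsame[OF i y lfi] yL lt K1 by (auto split: if_splits)
  qed
  ultimately have ci: "1/2 \<le> sum g4 (?R \<inter> Br i)" using cb_both[OF i] by blast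
  have mem: "m \<in> ?R" if mm: "m \<in> N" "m \<noteq> i" for m
  proof (rule memx)
    show "m \<in> V" using NV[OF mm(1)] .
    have "gdist adj x m = dep x + 1" using dist_diff[OF i mm(1) mm(2)[symmetric] x self_br[OF mm(1)]] dep_N[OF mm(1)] by simp
    moreover have "gdist adj y m = dep y + 1" using dist_diff[OF i mm(1) mm(2)[symmetric] y self_br[OF mm(1)]] dep_N[OF mm(1)] by simp
    ultimately show "gdist adj x m \<le> K" "gdist adj x m \<noteq> gdist adj y m" using lt yL LKi by auto
  qed
  have "1/4 \<le> sum g4 (?R \<inter> Br m1)" using cb_m[OF m(1) mem[OF m(1,3)]] .
  moreover have "1/4 \<le> sum g4 (?R \<inter> Br m2)" using cb_m[OF m(2) mem[OF m(2,4)]] .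
  moreover have "sum g4 (?R \<inter> Br i) + sum g4 (?R \<inter> Br m1) + sum g4 (?R \<inter> Br m2) \<le> sum g4 ?R"
    using sum3[OF Rk_sub i m(1,2) m(3)[symmetric] m(4)[symmetric] m(5)] .
  ultimately show ?thesis using ci by simp
qed

lemma caseC: assumes i: "i \<in> N" and j: "j \<in> N" and ij: "i \<noteq> j" and x: "x \<in> Br i" and y: "y \<in> Br j"
  shows "1 \<le> sum g4 (Rset_k V adj K x y)"
proof -
  let ?R = "Rset_k V adj K x y"
  have dx: "dep x \<ge> 1" using dep_pos x by blast
  have dy: "dep y \<ge> 1" using dep_pos y by blast
  have xL: "dep x \<le> dep (lf i)" using dep_le_lf[OF i x] .
  have yL: "dep y \<le> dep (lf j)" using dep_le_lf[OF j y] .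
  have LKi: "dep (lf i) \<le> K" using LK[OF i] .
  have LKj: "dep (lf j) \<le> K" using LK[OF j] .
  have ii: "i \<in> Br i" using self_br[OF i] .
  have jj: "j \<in> Br j" using self_br[OF j] .
  have lfi: "lf i \<in> Br i" using lf[OF i] by simp
  have lfj: "lf j \<in> Br j" using lf[OF j] by simp
  have Li: "lf i \<in> ?R"
  proof (rule memx)
    show "lf i \<in> V" using BrV[OF lfi] .
    have "gdist adj y (lf i) = dep y + dep (lf i)" using dist_diff[OF j i ij[symmetric] y lfi] .
    thus "gdist adj x (lf i) \<le> K" "gdist adj x (lf i) \<noteq> gdist adj y (lf i)"
      using dsame[OF i x lfi] xL LKi dy K1 by (auto split: if_splits)
  qed
  have Lj: "lf j \<in> ?R"
  proof (rule memy)
    show "lf j \<in> V" using BrV[OF lfj] .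
    have "gdist adj x (lf j) = dep x + dep (lf j)" using dist_diff[OF i j ij x lfj] .
    thus "gdist adj y (lf j) \<le> K" "gdist adj x (lf j) \<noteq> gdist adj y (lf j)"
      using dsame[OF j y lfj] yL LKj dx K1 by (auto split: if_splits)
  qed
  have Ii: "i \<in> ?R" if ne: "dep x \<noteq> dep y + 2"
  proof (rule memx)
    show "i \<in> V" using NV[OF i] .
    have "gdist adj y i = dep y + 1" using dist_diff[OF j i ij[symmetric] y ii] dep_N[OF i] by simp
    thus "gdist adj x i \<le> K" "gdist adj x i \<noteq> gdist adj y i"
      using dsame[OF i x ii] dep_N[OF i] xL LKi dx ne K1 by (auto split: if_splits)
  qed
  have Ij: "j \<in> ?R" if ne: "dep y \<noteq> dep x + 2"
  proof (rule memy)
    show "j \<in> V" using NV[OF j] .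
    have "gdist adj x j = dep x + 1" using dist_diff[OF i j ij x jj] dep_N[OF j] by simp
    thus "gdist adj y j \<le> K" "gdist adj x j \<noteq> gdist adj y j"
      using dsame[OF j y jj] dep_N[OF j] yL LKj dy ne K1 by (auto split: if_splits)
  qed
  have Im: "m \<in> ?R" if mm: "m \<in> N" "m \<noteq> i" "m \<noteq> j" and ne: "dep x \<noteq> dep y" for m
  proof -
    have m1: "gdist adj x m = dep x + 1" using dist_diff[OF i mm(1) mm(2)[symmetric] x self_br[OF mm(1)]] dep_N[OF mm(1)] by simp
    have m2: "gdist adj y m = dep y + 1" using dist_diff[OF j mm(1) mm(3)[symmetric] y self_br[OF mm(1)]] dep_N[OF mm(1)] by simp
    show ?thesis
    proof (cases "dep x < dep y")
      case True thus ?thesis using memx[of m x K y] NV[OF mm(1)] m1 m2 yL LKj by simp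
    next
      case False thus ?thesis using memy[of m y K x] NV[OF mm(1)] m1 m2 xL LKi ne by simp
    qed
  qed
  have s2: "sum g4 (?R \<inter> Br i) + sum g4 (?R \<inter> Br j) \<le> sum g4 ?R" using sum2[OF Rk_sub i j ij] .
  show ?thesis
  proof (cases "dep x = dep y")
    case True
    have "1/2 \<le> sum g4 (?R \<inter> Br i)" using cb_both[OF i Ii Li] True by simp
    moreover have "1/2 \<le> sum g4 (?R \<inter> Br j)" using cb_both[OF j Ij Lj] True by simp
    ultimately show ?thesis using s2 by simp
  next
    case False
    obtain m where m: "m \<in> N" "m \<noteq> i" "m \<noteq> j" using third[OF i j] by blast
    have cm: "1/4 \<le> sum g4 (?R \<inter> Br m)" using cb_m[OF m(1) Im[OF m False]] .
    have s3: "sum g4 (?R \<inter> Br i) + sum g4 (?R \<inter> Br j) + sum g4 (?R \<inter> Br m) \<le> sum g4 ?R"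
      using sum3[OF Rk_sub i j m(1) ij m(2)[symmetric] m(3)[symmetric]] .
    show ?thesis
    proof (cases "dep x = dep y + 2")
      case True
      have "1/4 \<le> sum g4 (?R \<inter> Br i)" using cb_lf[OF i Li] .
      moreover have "1/2 \<le> sum g4 (?R \<inter> Br j)" using cb_both[OF j Ij Lj] True by simp
      ultimately show ?thesis using s3 cm by simp
    next
      case False2: False
      show ?thesis
      proof (cases "dep y = dep x + 2")
        case True
        have "1/2 \<le> sum g4 (?R \<inter> Br i)" using cb_both[OF i Ii Li] False2 by simp
        moreover have "1/4 \<le> sum g4 (?R \<inter> Br j)" using cb_lf[OF j Lj] .
        ultimately show ?thesis using s3 cm by simp
      next
        case False
        have "1/2 \<le> sum g4 (?R \<inter> Br i)" using cb_both[OF i Ii Li] False2 by simp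
        moreover have "1/2 \<le> sum g4 (?R \<inter> Br j)" using cb_both[OF j Ij Lj] False by simp
        ultimately show ?thesis using s2 by simp
      qed
    qed
  qed
qed

lemma g4_pair: assumes x: "x \<in> V" and y: "y \<in> V" and xy: "x \<noteq> y"
  shows "1 \<le> sum g4 (Rset_k V adj K x y)"
proof (cases "x = v")
  case True
  then obtain i where i: "i \<in> N" "y \<in> Br i" using br_ex[OF y] xy by auto
  show ?thesis using caseA[OF i] True by simp
next
  case xv: False
  show ?thesis
  proof (cases "y = v")
    case True
    then obtain i where i: "i \<in> N" "x \<in> Br i" using br_ex[OF x] xv by auto
    have "1 \<le> sum g4 (Rset_k V adj K v x)" by (rule caseA[OF i])
    thus ?thesis using True Rk_sym[of K x y] by simp
  next
    case yv: False
    obtain i where i: "i \<in> N" "x \<in> Br i" using br_ex[OF x xv] by auto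
    obtain j where j: "j \<in> N" "y \<in> Br j" using br_ex[OF y yv] by auto
    show ?thesis
    proof (cases "i = j")
      case True
      hence yi: "y \<in> Br i" using j by simp
      have "dep x \<noteq> dep y" using same_dep[OF i(1) i(2) yi] xy by auto
      show ?thesis
      proof (cases "dep x < dep y")
        case True
        show ?thesis by (rule caseB[OF i yi True])
      next
        case False
        hence "dep y < dep x" using \<open>dep x \<noteq> dep y\<close> by simp
        hence "1 \<le> sum g4 (Rset_k V adj K y x)" by (rule caseB[OF i(1) yi i(2)])
        thus ?thesis using Rk_sym[of K x y] by simp
      qed
    next
      case False
      show ?thesis by (rule caseC[OF i(1) j(1) False i(2) j(2)])
    qed
  qed
qed

lemma g4_kres: "k_resolving_fun V adj K g4"
  unfolding k_resolving_fun_def using g4_pair g4_nn g4_le by auto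

end

lemma frac_dim_eq: "frac_dim V adj = card N / 2"
proof -
  define K where "K = Max (dep ` V)"
  have "N \<noteq> {}" using cardN by auto
  then obtain i where i: "i \<in> N" by blast
  have "dep i \<le> K" unfolding K_def using finV NV[OF i] by (intro Max_ge) auto
  hence K1: "K \<ge> 1" using dep_N[OF i] by simp
  have LK: "dep (lf m) \<le> K" if "m \<in> N" for m
    unfolding K_def using lf[OF that] BrV finV by (intro Max_ge) auto
  have res: "resolving_fun V adj g4" using kres_res[OF g4_kres[OF K1 LK] finV] .
  show ?thesis unfolding frac_dim_def
  proof (rule cInf_eq_minimum)
    show "card N / 2 \<in> {sum g V |g. resolving_fun V adj g}" using res sum_g4 by force
    fix x assume "x \<in> {sum g V |g. resolving_fun V adj g}"
    then obtain g where "x = sum g V" "resolving_fun V adj g" by blast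
    thus "card N / 2 \<le> x" using lower_bound by simp
  qed
qed

lemma frac_dim_k_eq: assumes K1: "K \<ge> 1" and LK: "\<And>m. m \<in> N \<Longrightarrow> dep (lf m) \<le> K"
  shows "frac_dim_k V adj K = card N / 2"
  unfolding frac_dim_k_def
proof (rule cInf_eq_minimum)
  show "card N / 2 \<in> {sum h V |h. k_resolving_fun V adj K h}" using g4_kres[OF K1 LK] sum_g4 by force
  fix x assume "x \<in> {sum h V |h. k_resolving_fun V adj K h}"
  then obtain h where "x = sum h V" "k_resolving_fun V adj K h" by blast
  thus "card N / 2 \<le> x" using lower_bound[OF kres_res[OF _ finV]] by simp
qed

lemma one_pair: assumes x: "x \<in> V" and y: "y \<in> V" and xy: "x \<noteq> y"
  shows "1 \<le> sum (\<lambda>_. 1::real) (Rset_k V adj K x y)"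
proof -
  have "gdist adj y x \<noteq> 0" using gdist_0_iff[OF y x] xy by simp
  hence "tdist adj K x x \<noteq> tdist adj K y x" unfolding tdist_def by simp
  hence xR: "x \<in> Rset_k V adj K x y" using x unfolding Rset_k_def by simp
  have fin: "finite (Rset_k V adj K x y)" using finite_subset[OF Rk_sub finV] .
  have "sum (\<lambda>_. 1::real) {x} \<le> sum (\<lambda>_. 1::real) (Rset_k V adj K x y)"
    using xR fin by (intro sum_mono2) auto
  thus ?thesis by simp
qed

lemma one_kres: "k_resolving_fun V adj K (\<lambda>_. 1)"
  unfolding k_resolving_fun_def using one_pair by simp

lemma frac_dim_k_big: assumes K1: "K \<ge> 1" and l: "leaf V adj l" and ld: "dep l \<ge> K + 1"
  shows "frac_dim_k V adj K \<ge> card N / 2 + 1/2"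
  unfolding frac_dim_k_def
proof (rule cInf_greatest)
  show "{sum h V |h. k_resolving_fun V adj K h} \<noteq> {}" using one_kres by blast
  fix x assume "x \<in> {sum h V |h. k_resolving_fun V adj K h}"
  then obtain h where "x = sum h V" "k_resolving_fun V adj K h" by blast
  thus "card N / 2 + 1/2 \<le> x" using long_leg_bound[OF _ K1 l ld] by simp
qed

end



theorem proposition3p18:
  fixes V :: "'a set" and adj :: "'a \<Rightarrow> 'a \<Rightarrow> bool" and k :: nat and v :: 'a
  assumes "k > 0"
    and "is_tree V adj"
    and "ex_num V adj = 1"
    and "exterior_major V adj v"
  shows "frac_dim_k V adj k = frac_dim V adj \<longleftrightarrow>
           (\<forall>l. terminal V adj v l \<longrightarrow> gdist adj v l \<le> k)"
proof -
  interpret T: tree V adj by (rule tree.intro) (rule assms(2))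
  have vV: "v \<in> V" and majv: "major V adj v" using assms(4) unfolding exterior_major_def major_def by auto
  have nomaj: "\<And>w. major V adj w \<Longrightarrow> w = v" using T.only_major[OF assms(3,4)] by blast
  interpret S: spider V adj v
    using spider.intro[OF T.tree_axioms spider_axioms.intro[OF vV majv nomaj]] .
  have termiff: "terminal V adj v l \<longleftrightarrow> leaf V adj l" for l
  proof
    assume "terminal V adj v l" thus "leaf V adj l" unfolding terminal_def by simp
  next
    assume l: "leaf V adj l"
    have "\<forall>w. major V adj w \<and> w \<noteq> v \<longrightarrow> gdist adj l v < gdist adj l w" using nomaj by blast
    thus "terminal V adj v l" unfolding terminal_def using majv l by simp
  qed
  have fd: "frac_dim V adj = card S.N / 2" by (rule S.frac_dim_eq)
  have k1: "k \<ge> 1" using assms(1) by simp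
  show ?thesis
  proof
    assume eq: "frac_dim_k V adj k = frac_dim V adj"
    show "\<forall>l. terminal V adj v l \<longrightarrow> gdist adj v l \<le> k"
    proof (intro allI impI)
      fix l assume "terminal V adj v l"
      hence l: "leaf V adj l" using termiff by simp
      show "gdist adj v l \<le> k"
      proof (rule ccontr)
        assume "\<not> gdist adj v l \<le> k"
        hence "S.dep l \<ge> k + 1" unfolding S.dep_def by simp
        hence "frac_dim_k V adj k \<ge> card S.N / 2 + 1/2" using S.frac_dim_k_big[OF k1 l] by simp
        thus False using eq fd by simp
      qed
    qed
  next
    assume H: "\<forall>l. terminal V adj v l \<longrightarrow> gdist adj v l \<le> k"
    have "S.dep (S.lf m) \<le> k" if m: "m \<in> S.N" for m
    proof -
      have "leaf V adj (S.lf m)" using S.lf[OF m] by simp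
      hence "terminal V adj v (S.lf m)" using termiff by simp
      thus ?thesis using H unfolding S.dep_def by simp
    qed
    hence "frac_dim_k V adj k = card S.N / 2" by (rule S.frac_dim_k_eq[OF k1])
    thus "frac_dim_k V adj k = frac_dim V adj" using fd by simp
  qed
qed



end
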